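(* Let $(\alpha,\beta)\in\Delta_K$ and $n\in\mathbb{Z}_{\ge0}$. Let $M_n=A_{\varepsilon_0}\cdots A_{\varepsilon_{n-1}}S=\begin{pmatrix}p''_n&p'_n&p_n\\ q''_n&q'_n&q_n\\ r''_n&r'_n&r_n\end{pmatrix}$, where $\varepsilon_k=\varepsilon(T^k(\alpha,\beta))$ (and $M_0=S$), and let $\delta_n(\alpha,\beta)$ be the set of interior points of the triangle in $\mathbb{R}^2$ with vertices $(q_n/p_n,r_n/p_n)$, $(q'_n/p'_n,r'_n/p'_n)$, $(q''_n/p''_n,r''_n/p''_n)$. Then $(\alpha,\beta)\in\delta_n(\alpha,\beta)$.
   Context: Let $K\subset\mathbb{R}$ be a real cubic number field, $N=N_{K/\mathbb{Q}}$ its norm. Fix $r=p/q$ with $p,q$ positive coprime integers and $3\nmid p$. Let $\Delta_K=\{(\alpha,\beta)\in K^2:\ 1,\alpha,\beta \text{ linearly independent over }\mathbb{Q},\ \alpha,\beta>0,\ \alpha+\beta<1\}$ and $Ind=\{(i,j): i,j\in\{0,1,2\},\ i\neq j\}$. Let $\Delta=\{(x,y)\in\mathbb{R}^2: x,y\ge 0,\ x+y\le 1\}$ and $\triangle(1,2)=\{(x,y)\in\Delta: x\ge y\}$, $\triangle(2,1)=\{x\le y\}$, $\triangle(0,1)=\{2x+y-1\le 0\}$, $\triangle(1,0)=\{2x+y-1\ge 0\}$, $\triangle(0,2)=\{x+2y-1\le0\}$, $\triangle(2,0)=\{x+2y-1\ge 0\}$ (all subsets of $\Delta$). Maps $T_{(i,j)}:\triangle(i,j)\to\Delta$: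 $T_{(1,2)}(x,y)=(\frac{x-y}{1-y},\frac{y}{1-y})$, $T_{(2,1)}(x,y)=(\frac{x}{1-x},\frac{y-x}{1-x})$, $T_{(0,1)}(x,y)=(\frac{x}{1-x},\frac{y}{1-x})$, $T_{(1,0)}(x,y)=(\frac{2x+y-1}{x+y},\frac{y}{x+y})$, $T_{(0,2)}(x,y)=(\frac{x}{1-y},\frac{y}{1-y})$, $T_{(2,0)}(x,y)=(\frac{x}{x+y},\frac{x+2y-1}{x+y})$. For $(\alpha,\beta)\in\Delta_K$ put $\gamma=1-\alpha-\beta$ and $v_{\{1,2\}}=\frac{\alpha^r\beta^r}{|N(\alpha)N(\beta)|}$, $v_{\{0,1\}}=\frac{\alpha^r\gamma^r}{|N(\alpha)N(\gamma)|}$, $v_{\{0,2\}}=\frac{\beta^r\gamma^r}{|N(\beta)N(\gamma)|}$; the maximum is attained at a unique pair $\{i_0,j_0\}$. $\varepsilon(\alpha,\beta)$ is the ordered pair $(i,j)\in Ind$ with $\{i,j\}=\{i_0,j_0\}$ and $(\alpha,\beta)\in\triangle(i,j)$, and $T(\alpha,\beta)=T_{\varepsilon(\alpha,\beta)}(\alpha,\beta)$ (a map $\Delta_K\to\Delta_K$). Matrices: $A_{(1,2)}=\begin{pmatrix}1&0&1\\0&1&1\\0&0&1\end{pmatrix}$, $A_{(2,1)}=\begin{pmatrix}1&1&0\\0&1&0\\0&1&1\end{pmatrix}$, $A_{(0,1)}=\begin{pmatrix}1&1&0\\0&1&0\\0&0&1\end{pmatrix}$, $A_{(1,0)}=\begin{pmatrix}2&-1&-1\\1&0&-1\\0&0&1\end{pmatrix}$,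 $A_{(0,2)}=\begin{pmatrix}1&0&1\\0&1&0\\0&0&1\end{pmatrix}$, $A_{(2,0)}=\begin{pmatrix}2&-1&-1\\0&1&0\\1&-1&0\end{pmatrix}$, $S=\begin{pmatrix}1&1&1\\0&1&0\\0&0&1\end{pmatrix}$. *)

theory Defs
  imports "HOL-Analysis.Analysis"
begin

text \<open>Every real cubic field K
is Q(theta) for such a theta (primitive element theorem), and conversely.\<close>
definition cubic_gen :: "real \<Rightarrow> bool" where
  "cubic_gen \<theta> \<longleftrightarrow>
     (\<exists>a b c :: rat. \<theta>^3 + of_rat a * \<theta>^2 + of_rat b * \<theta> + of_rat c = 0) \<and>
     (\<forall>a b c :: rat. of_rat a + of_rat b * \<theta> + of_rat c * \<theta>^2 = 0 \<longrightarrow> a = 0 \<and> b = 0 \<and> c = 0)"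

definition cfield :: "real \<Rightarrow> real set" where
  "cfield \<theta> = {of_rat a + of_rat b * \<theta> + of_rat c * \<theta>^2 | a b c :: rat. True}"

definition coords :: "real \<Rightarrow> real \<Rightarrow> rat \<times> rat \<times> rat" where
  "coords \<theta> x = (THE (a, b, c). x = of_rat a + of_rat b * \<theta> + of_rat c * \<theta>^2)"

text \<open>Field norm N_{K/Q}(x): determinant of the Q-linear map y |-> x*y of K,
 in the basis 1, theta, theta^2 (columns: coordinates of x, x*theta, x*theta^2).\<close>
definition fnorm :: "real \<Rightarrow> real \<Rightarrow> rat" where
  "fnorm \<theta> x =
    (case coords \<theta> x of (a1, a2, a3) \<Rightarrow>
     case coords \<theta> (x * \<theta>) of (b1, b2, b3) \<Rightarrow>
     case coords \<theta> (x * \<theta>^2) of (c1, c2, c3) \<Rightarrow>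
       a1 * (b2 * c3 - b3 * c2) - b1 * (a2 * c3 - a3 * c2) + c1 * (a2 * b3 - a3 * b2))"

definition DeltaK :: "real \<Rightarrow> (real \<times> real) set" where
  "DeltaK \<theta> = {(\<alpha>, \<beta>). \<alpha> \<in> cfield \<theta> \<and> \<beta> \<in> cfield \<theta> \<and>
      (\<forall>a b c :: rat. of_rat a + of_rat b * \<alpha> + of_rat c * \<beta> = 0 \<longrightarrow> a = 0 \<and> b = 0 \<and> c = 0) \<and>
      \<alpha> > 0 \<and> \<beta> > 0 \<and> \<alpha> + \<beta> < 1}"

definition vval :: "real \<Rightarrow> real \<Rightarrow> real \<Rightarrow> real \<Rightarrow> real" where
  "vval \<theta> r s t = (s powr r * t powr r) / \<bar>real_of_rat (fnorm \<theta> s) * real_of_rat (fnorm \<theta> t)\<bar>"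

definition tri :: "nat \<times> nat \<Rightarrow> (real \<times> real) set" where
  "tri e = {(x, y). x \<ge> 0 \<and> y \<ge> 0 \<and> x + y \<le> 1 \<and>
     (if e = (1,2) then x \<ge> y
      else if e = (2,1) then x \<le> y
      else if e = (0,1) then 2*x + y - 1 \<le> 0
      else if e = (1,0) then 2*x + y - 1 \<ge> 0
      else if e = (0,2) then x + 2*y - 1 \<le> 0
      else if e = (2,0) then x + 2*y - 1 \<ge> 0
      else False)}"

text \<open>epsilon(alpha,beta): the ordered pair (i,j) in Ind with {i,j} the (unique) pair maximizing
 v, and (alpha,beta) in triangle(i,j).  (Uniqueness of the maximizing pair and of the
 orientation holds on Delta_K; the tie-breaking below is therefore immaterial there.)\<close>
definition eps :: "real \<Rightarrow> real \<Rightarrow> real \<times> real \<Rightarrow> nat \<times> nat" where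
  "eps \<theta> r p = (case p of (x, y) \<Rightarrow>
     let g = 1 - x - y;
         v12 = vval \<theta> r x y; v01 = vval \<theta> r x g; v02 = vval \<theta> r y g
     in if v12 \<ge> v01 \<and> v12 \<ge> v02 then (if (x, y) \<in> tri (1,2) then (1,2) else (2,1))
        else if v01 \<ge> v02 then (if (x, y) \<in> tri (0,1) then (0,1) else (1,0))
        else (if (x, y) \<in> tri (0,2) then (0,2) else (2,0)))"

definition Tmap :: "nat \<times> nat \<Rightarrow> real \<times> real \<Rightarrow> real \<times> real" where
  "Tmap e p = (case p of (x, y) \<Rightarrow>
      if e = (1,2) then ((x - y) / (1 - y), y / (1 - y))
      else if e = (2,1) then (x / (1 - x), (y - x) / (1 - x))
      else if e = (0,1) then (x / (1 - x), y / (1 - x))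
      else if e = (1,0) then ((2*x + y - 1) / (x + y), y / (x + y))
      else if e = (0,2) then (x / (1 - y), y / (1 - y))
      else ((x / (x + y), (x + 2*y - 1) / (x + y))))"

definition T :: "real \<Rightarrow> real \<Rightarrow> real \<times> real \<Rightarrow> real \<times> real" where
  "T \<theta> r p = Tmap (eps \<theta> r p) p"

type_synonym mat3 = "nat \<Rightarrow> nat \<Rightarrow> real"

definition mat3 :: "real list list \<Rightarrow> mat3" where
  "mat3 L = (\<lambda>i j. L ! i ! j)"

definition mmul :: "mat3 \<Rightarrow> mat3 \<Rightarrow> mat3" where
  "mmul A B = (\<lambda>i j. \<Sum>k<3. A i k * B k j)"

definition mid :: mat3 where
  "mid = (\<lambda>i j. if i = j then 1 else 0)"

definition Amat :: "nat \<times> nat \<Rightarrow> mat3" where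
  "Amat e =
     (if e = (1,2) then mat3 [[1,0,1],[0,1,1],[0,0,1]]
      else if e = (2,1) then mat3 [[1,1,0],[0,1,0],[0,1,1]]
      else if e = (0,1) then mat3 [[1,1,0],[0,1,0],[0,0,1]]
      else if e = (1,0) then mat3 [[2,-1,-1],[1,0,-1],[0,0,1]]
      else if e = (0,2) then mat3 [[1,0,1],[0,1,0],[0,0,1]]
      else mat3 [[2,-1,-1],[0,1,0],[1,-1,0]])"

definition Smat :: mat3 where
  "Smat = mat3 [[1,1,1],[0,1,0],[0,0,1]]"

fun Aprod :: "real \<Rightarrow> real \<Rightarrow> nat \<Rightarrow> real \<times> real \<Rightarrow> mat3" where
  "Aprod \<theta> r 0 p = mid"
| "Aprod \<theta> r (Suc n) p = mmul (Amat (eps \<theta> r p)) (Aprod \<theta> r n (T \<theta> r p))"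

definition Mn :: "real \<Rightarrow> real \<Rightarrow> nat \<Rightarrow> real \<times> real \<Rightarrow> mat3" where
  "Mn \<theta> r n p = mmul (Aprod \<theta> r n p) Smat"

definition vert :: "mat3 \<Rightarrow> nat \<Rightarrow> real \<times> real" where
  "vert M j = (M 1 j / M 0 j, M 2 j / M 0 j)"

definition delta_n :: "real \<Rightarrow> real \<Rightarrow> nat \<Rightarrow> real \<times> real \<Rightarrow> (real \<times> real) set" where
  "delta_n \<theta> r n p = (let M = Mn \<theta> r n p in interior (convex hull {vert M 2, vert M 1, vert M 0}))"

end

theory Submission
  imports Defs
begin

definition mvec :: "mat3 \<Rightarrow> real \<times> real \<times> real \<Rightarrow> real \<times> real \<times> real" where
  "mvec M x = (case x of (a,b,c) \<Rightarrow>
     (M 0 0 * a + M 0 1 * b + M 0 2 * c, M 1 0 * a + M 1 1 * b + M 1 2 * c,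
      M 2 0 * a + M 2 1 * b + M 2 2 * c))"

definition det3 :: "mat3 \<Rightarrow> real" where
  "det3 M = M 0 0 * (M 1 1 * M 2 2 - M 1 2 * M 2 1) - M 0 1 * (M 1 0 * M 2 2 - M 1 2 * M 2 0)
     + M 0 2 * (M 1 0 * M 2 1 - M 1 1 * M 2 0)"

definition cone :: "real \<times> real \<times> real \<Rightarrow> bool" where
  "cone x = (case x of (a,b,c) \<Rightarrow> a > 0 \<and> b \<ge> 0 \<and> c \<ge> 0 \<and> b + c \<le> a)"

definition PP :: "real \<times> real \<Rightarrow> bool" where
  "PP p = (case p of (x,y) \<Rightarrow> x > 0 \<and> y > 0 \<and> x + y < 1 \<and>
     (\<forall>a b c :: rat. of_rat a + of_rat b * x + of_rat c * y = 0 \<longrightarrow> a = 0 \<and> b = 0 \<and> c = 0))"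

definition vv :: "real \<times> real \<Rightarrow> real \<times> real \<times> real" where
  "vv p = (1, fst p, snd p)"

lemma sum3: "(\<Sum>k<(3::nat). f k) = f 0 + f 1 + (f 2::real)"
  by (simp add: eval_nat_numeral)

lemma mvec_mmul: "mvec (mmul A B) x = mvec A (mvec B x)"
  by (cases x) (simp add: mvec_def mmul_def sum3 algebra_simps)

lemma mvec_scale: "mvec A (c *\<^sub>R x) = c *\<^sub>R mvec A x"
  by (cases x) (simp add: mvec_def algebra_simps)

lemma det3_mmul: "det3 (mmul A B) = det3 A * det3 B"
  unfolding det3_def mmul_def sum3 by (simp add: algebra_simps)

lemma det3_Amat: "det3 (Amat e) \<noteq> 0"
  by (simp add: Amat_def det3_def mat3_def)

lemma cone_Amat: "cone x \<Longrightarrow> cone (mvec (Amat e) x)"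
  by (cases x) (auto simp: Amat_def cone_def mvec_def mat3_def)

lemma det3_Aprod: "det3 (Aprod \<theta> r n p) \<noteq> 0"
proof (induction n arbitrary: p)
  case 0 show ?case by (simp add: det3_def mid_def)
next
  case (Suc n) thus ?case by (simp only: Aprod.simps det3_mmul) (simp add: det3_Amat)
qed

lemma cone_Aprod: "cone x \<Longrightarrow> cone (mvec (Aprod \<theta> r n p) x)"
proof (induction n arbitrary: p x)
  case 0 thus ?case by (cases x) (simp add: mid_def mvec_def)
next
  case (Suc n) thus ?case by (simp only: Aprod.simps mvec_mmul) (simp add: cone_Amat)
qed

lemma eps_tri: "x \<ge> 0 \<Longrightarrow> y \<ge> 0 \<Longrightarrow> x+y \<le> 1 \<Longrightarrow> (x,y) \<in> tri (eps \<theta> r (x,y))"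
  unfolding eps_def Let_def by (auto simp: tri_def)

lemma PPD: assumes "PP (x,y)"
  shows "x > 0" "y > 0" "x + y < 1"
    "\<And>a b c. of_rat a + of_rat b * x + of_rat c * y = 0 \<Longrightarrow> a = 0 \<and> b = 0 \<and> c = 0"
  using assms by (auto simp: PP_def)


lemma step12: assumes "PP (x,y)" "x \<ge> y"
  shows "PP ((x-y)/(1-y), y/(1-y))"
    "vv (x,y) = (1-y) *\<^sub>R mvec (Amat (1,2)) (vv ((x-y)/(1-y), y/(1-y)))"
    "1-y > 0"
    "\<exists>c>0. vv (x,y) = c *\<^sub>R mvec (Amat (1,2)) (vv ((x-y)/(1-y), y/(1-y)))"
proof -
  note P = PPD[OF assms(1)]
  have ne: "x - y \<noteq> 0"
  proof
    assume "x - y = 0"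
    hence "of_rat (0) + of_rat (1) * x + of_rat (-1) * y = 0" by simp
    from P(4)[OF this] show False by simp
  qed
  have s: "x - y \<noteq> 0" "x \<ge> y" by (rule ne) (rule assms(2))
  have d: "1-y > 0" using P by auto
  thus "1-y > 0" .
  show V: "vv (x,y) = (1-y) *\<^sub>R mvec (Amat (1,2)) (vv ((x-y)/(1-y), y/(1-y)))"
    using d by (simp add: vv_def mvec_def Amat_def mat3_def divide_simps)
  show "\<exists>c>0. vv (x,y) = c *\<^sub>R mvec (Amat (1,2)) (vv ((x-y)/(1-y), y/(1-y)))" using V d by blast
  have "(x-y)/(1-y) > 0" "y/(1-y) > 0" "(x-y)/(1-y) + y/(1-y) < 1"
    using d s P by (auto simp: divide_simps)
  moreover have "a = 0 \<and> b = 0 \<and> c = 0" if h: "of_rat a + of_rat b * ((x-y)/(1-y)) + of_rat c * (y/(1-y)) = 0" for a b c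
  proof -
    have "of_rat a * (1-y) + of_rat b * (x - y) + of_rat c * (y) = (1-y) * (of_rat a + of_rat b * ((x-y)/(1-y)) + of_rat c * (y/(1-y)))"
      using d by (simp add: divide_simps)
    also have "\<dots> = 0" using h by simp
    finally have h2: "of_rat a * (1-y) + of_rat b * (x - y) + of_rat c * (y) = 0" .
    have "of_rat (a) + of_rat (b) * x + of_rat (c-a-b) * y = of_rat a * (1-y) + of_rat b * (x - y) + of_rat c * (y)"
      by (simp add: of_rat_add of_rat_diff of_rat_minus of_rat_mult algebra_simps)
    with h2 have "of_rat (a) + of_rat (b) * x + of_rat (c-a-b) * y = 0" by simp
    from P(4)[OF this] show ?thesis by auto
  qed
  ultimately show "PP ((x-y)/(1-y), y/(1-y))" by (simp add: PP_def)
qed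

lemma step21: assumes "PP (x,y)" "x \<le> y"
  shows "PP (x/(1-x), (y-x)/(1-x))"
    "vv (x,y) = (1-x) *\<^sub>R mvec (Amat (2,1)) (vv (x/(1-x), (y-x)/(1-x)))"
    "1-x > 0"
    "\<exists>c>0. vv (x,y) = c *\<^sub>R mvec (Amat (2,1)) (vv (x/(1-x), (y-x)/(1-x)))"
proof -
  note P = PPD[OF assms(1)]
  have ne: "x - y \<noteq> 0"
  proof
    assume "x - y = 0"
    hence "of_rat (0) + of_rat (1) * x + of_rat (-1) * y = 0" by simp
    from P(4)[OF this] show False by simp
  qed
  have s: "x - y \<noteq> 0" "x \<le> y" by (rule ne) (rule assms(2))
  have d: "1-x > 0" using P by auto
  thus "1-x > 0" .
  show V: "vv (x,y) = (1-x) *\<^sub>R mvec (Amat (2,1)) (vv (x/(1-x), (y-x)/(1-x)))"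
    using d by (simp add: vv_def mvec_def Amat_def mat3_def divide_simps)
  show "\<exists>c>0. vv (x,y) = c *\<^sub>R mvec (Amat (2,1)) (vv (x/(1-x), (y-x)/(1-x)))" using V d by blast
  have "x/(1-x) > 0" "(y-x)/(1-x) > 0" "x/(1-x) + (y-x)/(1-x) < 1"
    using d s P by (auto simp: divide_simps)
  moreover have "a = 0 \<and> b = 0 \<and> c = 0" if h: "of_rat a + of_rat b * (x/(1-x)) + of_rat c * ((y-x)/(1-x)) = 0" for a b c
  proof -
    have "of_rat a * (1-x) + of_rat b * (x) + of_rat c * (y - x) = (1-x) * (of_rat a + of_rat b * (x/(1-x)) + of_rat c * ((y-x)/(1-x)))"
      using d by (simp add: divide_simps)
    also have "\<dots> = 0" using h by simp
    finally have h2: "of_rat a * (1-x) + of_rat b * (x) + of_rat c * (y - x) = 0" .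
    have "of_rat (a) + of_rat (b-a-c) * x + of_rat (c) * y = of_rat a * (1-x) + of_rat b * (x) + of_rat c * (y - x)"
      by (simp add: of_rat_add of_rat_diff of_rat_minus of_rat_mult algebra_simps)
    with h2 have "of_rat (a) + of_rat (b-a-c) * x + of_rat (c) * y = 0" by simp
    from P(4)[OF this] show ?thesis by auto
  qed
  ultimately show "PP (x/(1-x), (y-x)/(1-x))" by (simp add: PP_def)
qed

lemma step01: assumes "PP (x,y)" "2*x + y - 1 \<le> 0"
  shows "PP (x/(1-x), y/(1-x))"
    "vv (x,y) = (1-x) *\<^sub>R mvec (Amat (0,1)) (vv (x/(1-x), y/(1-x)))"
    "1-x > 0"
    "\<exists>c>0. vv (x,y) = c *\<^sub>R mvec (Amat (0,1)) (vv (x/(1-x), y/(1-x)))"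
proof -
  note P = PPD[OF assms(1)]
  have ne: "2*x + y - 1 \<noteq> 0"
  proof
    assume "2*x + y - 1 = 0"
    hence "of_rat (-1) + of_rat (2) * x + of_rat (1) * y = 0" by simp
    from P(4)[OF this] show False by simp
  qed
  have s: "2*x + y - 1 \<noteq> 0" "2*x + y - 1 \<le> 0" by (rule ne) (rule assms(2))
  have d: "1-x > 0" using P by auto
  thus "1-x > 0" .
  show V: "vv (x,y) = (1-x) *\<^sub>R mvec (Amat (0,1)) (vv (x/(1-x), y/(1-x)))"
    using d by (simp add: vv_def mvec_def Amat_def mat3_def divide_simps)
  show "\<exists>c>0. vv (x,y) = c *\<^sub>R mvec (Amat (0,1)) (vv (x/(1-x), y/(1-x)))" using V d by blast
  have "x/(1-x) > 0" "y/(1-x) > 0" "x/(1-x) + y/(1-x) < 1"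
    using d s P by (auto simp: divide_simps)
  moreover have "a = 0 \<and> b = 0 \<and> c = 0" if h: "of_rat a + of_rat b * (x/(1-x)) + of_rat c * (y/(1-x)) = 0" for a b c
  proof -
    have "of_rat a * (1-x) + of_rat b * (x) + of_rat c * (y) = (1-x) * (of_rat a + of_rat b * (x/(1-x)) + of_rat c * (y/(1-x)))"
      using d by (simp add: divide_simps)
    also have "\<dots> = 0" using h by simp
    finally have h2: "of_rat a * (1-x) + of_rat b * (x) + of_rat c * (y) = 0" .
    have "of_rat (a) + of_rat (b-a) * x + of_rat (c) * y = of_rat a * (1-x) + of_rat b * (x) + of_rat c * (y)"
      by (simp add: of_rat_add of_rat_diff of_rat_minus of_rat_mult algebra_simps)
    with h2 have "of_rat (a) + of_rat (b-a) * x + of_rat (c) * y = 0" by simp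
    from P(4)[OF this] show ?thesis by auto
  qed
  ultimately show "PP (x/(1-x), y/(1-x))" by (simp add: PP_def)
qed

lemma step10: assumes "PP (x,y)" "2*x + y - 1 \<ge> 0"
  shows "PP ((2*x+y-1)/(x+y), y/(x+y))"
    "vv (x,y) = (x+y) *\<^sub>R mvec (Amat (1,0)) (vv ((2*x+y-1)/(x+y), y/(x+y)))"
    "x+y > 0"
    "\<exists>c>0. vv (x,y) = c *\<^sub>R mvec (Amat (1,0)) (vv ((2*x+y-1)/(x+y), y/(x+y)))"
proof -
  note P = PPD[OF assms(1)]
  have ne: "2*x + y - 1 \<noteq> 0"
  proof
    assume "2*x + y - 1 = 0"
    hence "of_rat (-1) + of_rat (2) * x + of_rat (1) * y = 0" by simp
    from P(4)[OF this] show False by simp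
  qed
  have s: "2*x + y - 1 \<noteq> 0" "2*x + y - 1 \<ge> 0" by (rule ne) (rule assms(2))
  have d: "x+y > 0" using P by auto
  thus "x+y > 0" .
  show V: "vv (x,y) = (x+y) *\<^sub>R mvec (Amat (1,0)) (vv ((2*x+y-1)/(x+y), y/(x+y)))"
    using d by (simp add: vv_def mvec_def Amat_def mat3_def divide_simps)
  show "\<exists>c>0. vv (x,y) = c *\<^sub>R mvec (Amat (1,0)) (vv ((2*x+y-1)/(x+y), y/(x+y)))" using V d by blast
  have "(2*x+y-1)/(x+y) > 0" "y/(x+y) > 0" "(2*x+y-1)/(x+y) + y/(x+y) < 1"
    using d s P by (auto simp: divide_simps)
  moreover have "a = 0 \<and> b = 0 \<and> c = 0" if h: "of_rat a + of_rat b * ((2*x+y-1)/(x+y)) + of_rat c * (y/(x+y)) = 0" for a b c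
  proof -
    have "of_rat a * (x+y) + of_rat b * (2*x+y-1) + of_rat c * (y) = (x+y) * (of_rat a + of_rat b * ((2*x+y-1)/(x+y)) + of_rat c * (y/(x+y)))"
      using d by (simp add: divide_simps)
    also have "\<dots> = 0" using h by simp
    finally have h2: "of_rat a * (x+y) + of_rat b * (2*x+y-1) + of_rat c * (y) = 0" .
    have "of_rat (-b) + of_rat (a+2*b) * x + of_rat (a+b+c) * y = of_rat a * (x+y) + of_rat b * (2*x+y-1) + of_rat c * (y)"
      by (simp add: of_rat_add of_rat_diff of_rat_minus of_rat_mult algebra_simps)
    with h2 have "of_rat (-b) + of_rat (a+2*b) * x + of_rat (a+b+c) * y = 0" by simp
    from P(4)[OF this] show ?thesis by auto
  qed
  ultimately show "PP ((2*x+y-1)/(x+y), y/(x+y))" by (simp add: PP_def)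
qed

lemma step02: assumes "PP (x,y)" "x + 2*y - 1 \<le> 0"
  shows "PP (x/(1-y), y/(1-y))"
    "vv (x,y) = (1-y) *\<^sub>R mvec (Amat (0,2)) (vv (x/(1-y), y/(1-y)))"
    "1-y > 0"
    "\<exists>c>0. vv (x,y) = c *\<^sub>R mvec (Amat (0,2)) (vv (x/(1-y), y/(1-y)))"
proof -
  note P = PPD[OF assms(1)]
  have ne: "x + 2*y - 1 \<noteq> 0"
  proof
    assume "x + 2*y - 1 = 0"
    hence "of_rat (-1) + of_rat (1) * x + of_rat (2) * y = 0" by simp
    from P(4)[OF this] show False by simp
  qed
  have s: "x + 2*y - 1 \<noteq> 0" "x + 2*y - 1 \<le> 0" by (rule ne) (rule assms(2))
  have d: "1-y > 0" using P by auto
  thus "1-y > 0" .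
  show V: "vv (x,y) = (1-y) *\<^sub>R mvec (Amat (0,2)) (vv (x/(1-y), y/(1-y)))"
    using d by (simp add: vv_def mvec_def Amat_def mat3_def divide_simps)
  show "\<exists>c>0. vv (x,y) = c *\<^sub>R mvec (Amat (0,2)) (vv (x/(1-y), y/(1-y)))" using V d by blast
  have "x/(1-y) > 0" "y/(1-y) > 0" "x/(1-y) + y/(1-y) < 1"
    using d s P by (auto simp: divide_simps)
  moreover have "a = 0 \<and> b = 0 \<and> c = 0" if h: "of_rat a + of_rat b * (x/(1-y)) + of_rat c * (y/(1-y)) = 0" for a b c
  proof -
    have "of_rat a * (1-y) + of_rat b * (x) + of_rat c * (y) = (1-y) * (of_rat a + of_rat b * (x/(1-y)) + of_rat c * (y/(1-y)))"
      using d by (simp add: divide_simps)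
    also have "\<dots> = 0" using h by simp
    finally have h2: "of_rat a * (1-y) + of_rat b * (x) + of_rat c * (y) = 0" .
    have "of_rat (a) + of_rat (b) * x + of_rat (c-a) * y = of_rat a * (1-y) + of_rat b * (x) + of_rat c * (y)"
      by (simp add: of_rat_add of_rat_diff of_rat_minus of_rat_mult algebra_simps)
    with h2 have "of_rat (a) + of_rat (b) * x + of_rat (c-a) * y = 0" by simp
    from P(4)[OF this] show ?thesis by auto
  qed
  ultimately show "PP (x/(1-y), y/(1-y))" by (simp add: PP_def)
qed

lemma step20: assumes "PP (x,y)" "x + 2*y - 1 \<ge> 0"
  shows "PP (x/(x+y), (x+2*y-1)/(x+y))"
    "vv (x,y) = (x+y) *\<^sub>R mvec (Amat (2,0)) (vv (x/(x+y), (x+2*y-1)/(x+y)))"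
    "x+y > 0"
    "\<exists>c>0. vv (x,y) = c *\<^sub>R mvec (Amat (2,0)) (vv (x/(x+y), (x+2*y-1)/(x+y)))"
proof -
  note P = PPD[OF assms(1)]
  have ne: "x + 2*y - 1 \<noteq> 0"
  proof
    assume "x + 2*y - 1 = 0"
    hence "of_rat (-1) + of_rat (1) * x + of_rat (2) * y = 0" by simp
    from P(4)[OF this] show False by simp
  qed
  have s: "x + 2*y - 1 \<noteq> 0" "x + 2*y - 1 \<ge> 0" by (rule ne) (rule assms(2))
  have d: "x+y > 0" using P by auto
  thus "x+y > 0" .
  show V: "vv (x,y) = (x+y) *\<^sub>R mvec (Amat (2,0)) (vv (x/(x+y), (x+2*y-1)/(x+y)))"
    using d by (simp add: vv_def mvec_def Amat_def mat3_def divide_simps)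
  show "\<exists>c>0. vv (x,y) = c *\<^sub>R mvec (Amat (2,0)) (vv (x/(x+y), (x+2*y-1)/(x+y)))" using V d by blast
  have "x/(x+y) > 0" "(x+2*y-1)/(x+y) > 0" "x/(x+y) + (x+2*y-1)/(x+y) < 1"
    using d s P by (auto simp: divide_simps)
  moreover have "a = 0 \<and> b = 0 \<and> c = 0" if h: "of_rat a + of_rat b * (x/(x+y)) + of_rat c * ((x+2*y-1)/(x+y)) = 0" for a b c
  proof -
    have "of_rat a * (x+y) + of_rat b * (x) + of_rat c * (x+2*y-1) = (x+y) * (of_rat a + of_rat b * (x/(x+y)) + of_rat c * ((x+2*y-1)/(x+y)))"
      using d by (simp add: divide_simps)
    also have "\<dots> = 0" using h by simp
    finally have h2: "of_rat a * (x+y) + of_rat b * (x) + of_rat c * (x+2*y-1) = 0" .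
    have "of_rat (-c) + of_rat (a+b+c) * x + of_rat (a+2*c) * y = of_rat a * (x+y) + of_rat b * (x) + of_rat c * (x+2*y-1)"
      by (simp add: of_rat_add of_rat_diff of_rat_minus of_rat_mult algebra_simps)
    with h2 have "of_rat (-c) + of_rat (a+b+c) * x + of_rat (a+2*c) * y = 0" by simp
    from P(4)[OF this] show ?thesis by auto
  qed
  ultimately show "PP (x/(x+y), (x+2*y-1)/(x+y))" by (simp add: PP_def)
qed


lemma stepT': assumes PP: "PP (x,y)"
  shows "PP (T \<theta> r (x,y)) \<and> (\<exists>c>0. vv (x,y) = c *\<^sub>R mvec (Amat (eps \<theta> r (x,y))) (vv (T \<theta> r (x,y))))"
proof -
  note P = PPD[OF PP]
  have m: "(x,y) \<in> tri (eps \<theta> r (x,y))" by (rule eps_tri) (use P in auto)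
  define e where "e = eps \<theta> r (x,y)"
  have "e = (1,2) \<and> x \<ge> y \<or> e = (2,1) \<and> x \<le> y \<or> e = (0,1) \<and> 2*x + y - 1 \<le> 0
     \<or> e = (1,0) \<and> 2*x + y - 1 \<ge> 0 \<or> e = (0,2) \<and> x + 2*y - 1 \<le> 0 \<or> e = (2,0) \<and> x + 2*y - 1 \<ge> 0"
    using m unfolding e_def[symmetric] tri_def by (auto split: if_splits)
  hence "PP (Tmap e (x,y)) \<and> (\<exists>c>0. vv (x,y) = c *\<^sub>R mvec (Amat e) (vv (Tmap e (x,y))))" (is ?G)
  proof (elim disjE conjE)
    assume "e = (1,2)" "x \<ge> y" thus ?G using step12[OF PP] by (simp add: Tmap_def)
  next
    assume "e = (2,1)" "x \<le> y" thus ?G using step21[OF PP] by (simp add: Tmap_def)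
  next
    assume "e = (0,1)" "2*x + y - 1 \<le> 0" thus ?G using step01[OF PP] by (simp add: Tmap_def)
  next
    assume "e = (1,0)" "2*x + y - 1 \<ge> 0" thus ?G using step10[OF PP] by (simp add: Tmap_def)
  next
    assume "e = (0,2)" "x + 2*y - 1 \<le> 0" thus ?G using step02[OF PP] by (simp add: Tmap_def)
  next
    assume "e = (2,0)" "x + 2*y - 1 \<ge> 0" thus ?G using step20[OF PP] by (simp add: Tmap_def)
  qed
  thus ?thesis unfolding T_def e_def .
qed

lemma stepT: assumes "PP p"
  shows "PP (T \<theta> r p) \<and> (\<exists>c>0. vv p = c *\<^sub>R mvec (Amat (eps \<theta> r p)) (vv (T \<theta> r p)))"
  using stepT'[of "fst p" "snd p"] assms by simp

lemma mvec_mid: "mvec mid x = x"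
  by (cases x) (simp add: mvec_def mid_def)

lemma main: "PP p \<Longrightarrow> \<exists>c>0. \<exists>q. PP q \<and> vv p = c *\<^sub>R mvec (Aprod \<theta> r n p) (vv q)"
proof (induction n arbitrary: p)
  case 0 thus ?case by (intro exI[of _ 1] conjI exI[of _ p]) (auto simp: mvec_mid)
next
  case (Suc n)
  from stepT[OF Suc.prems] obtain c0 where c0: "c0 > 0" "PP (T \<theta> r p)"
    "vv p = c0 *\<^sub>R mvec (Amat (eps \<theta> r p)) (vv (T \<theta> r p))" by blast
  from Suc.IH[OF c0(2)] obtain c1 q where c1: "c1 > 0" "PP q"
    "vv (T \<theta> r p) = c1 *\<^sub>R mvec (Aprod \<theta> r n (T \<theta> r p)) (vv q)" by blast
  have "vv p = (c0 * c1) *\<^sub>R mvec (Aprod \<theta> r (Suc n) p) (vv q)"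
    using c0(3) c1(3) by (simp add: mvec_mmul mvec_scale)
  thus ?case using c0 c1 by (intro exI[of _ "c0*c1"] conjI exI[of _ q]) auto
qed


lemma cancel_aux: "c \<noteq> (0::real) \<Longrightarrow> c * l * (m / c) = m * l" by simp

lemma geom:
  fixes M :: mat3
  assumes dn: "det3 M \<noteq> 0" and pos: "M 0 0 > 0" "M 0 1 > 0" "M 0 2 > 0"
    and w: "w0 > 0" "w1 > 0" "w2 > 0"
    and eq: "mvec M (w0, w1, w2) = (1, a, b)"
  shows "(a, b) \<in> interior (convex hull {vert M 2, vert M 1, vert M 0})"
proof -
  define N0 where "N0 = (\<lambda>z::real\<times>real. (M 1 1 * M 2 2 - M 1 2 * M 2 1) + (M 0 2 * M 2 1 - M 0 1 * M 2 2) * fst z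
      + (M 0 1 * M 1 2 - M 0 2 * M 1 1) * snd z)"
  define N1 where "N1 = (\<lambda>z::real\<times>real. (M 1 2 * M 2 0 - M 1 0 * M 2 2) + (M 0 0 * M 2 2 - M 0 2 * M 2 0) * fst z
      + (M 0 2 * M 1 0 - M 0 0 * M 1 2) * snd z)"
  define N2 where "N2 = (\<lambda>z::real\<times>real. (M 1 0 * M 2 1 - M 1 1 * M 2 0) + (M 0 1 * M 2 0 - M 0 0 * M 2 1) * fst z
      + (M 0 0 * M 1 1 - M 0 1 * M 1 0) * snd z)"
  define lam0 where "lam0 = (\<lambda>z. N0 z / det3 M)"
  define lam1 where "lam1 = (\<lambda>z. N1 z / det3 M)"
  define lam2 where "lam2 = (\<lambda>z. N2 z / det3 M)"
  have G1: "M 0 0 * N0 z + M 0 1 * N1 z + M 0 2 * N2 z = det3 M * 1"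
    "M 1 0 * N0 z + M 1 1 * N1 z + M 1 2 * N2 z = det3 M * fst z"
    "M 2 0 * N0 z + M 2 1 * N1 z + M 2 2 * N2 z = det3 M * snd z" for z
    unfolding N0_def N1_def N2_def det3_def by (simp_all add: algebra_simps)
  have F1: "M 0 0 * lam0 z + M 0 1 * lam1 z + M 0 2 * lam2 z = 1"
    "M 1 0 * lam0 z + M 1 1 * lam1 z + M 1 2 * lam2 z = fst z"
    "M 2 0 * lam0 z + M 2 1 * lam1 z + M 2 2 * lam2 z = snd z" for z
  proof -
    have h: "M i 0 * lam0 z + M i 1 * lam1 z + M i 2 * lam2 z = (M i 0 * N0 z + M i 1 * N1 z + M i 2 * N2 z) / det3 M" for i
      unfolding lam0_def lam1_def lam2_def by (simp add: add_divide_distrib)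
    show "M 0 0 * lam0 z + M 0 1 * lam1 z + M 0 2 * lam2 z = 1"
      "M 1 0 * lam0 z + M 1 1 * lam1 z + M 1 2 * lam2 z = fst z"
      "M 2 0 * lam0 z + M 2 1 * lam1 z + M 2 2 * lam2 z = snd z"
      unfolding h G1 using dn by simp_all
  qed
  have e1: "M 0 0 * w0 + M 0 1 * w1 + M 0 2 * w2 = 1"
    and e2: "M 1 0 * w0 + M 1 1 * w1 + M 1 2 * w2 = a"
    and e3: "M 2 0 * w0 + M 2 1 * w1 + M 2 2 * w2 = b"
    using eq by (simp_all add: mvec_def)
  have H: "N0 (a,b) - det3 M * w0 = (M 1 1 * M 2 2 - M 1 2 * M 2 1) * (1 - (M 0 0 * w0 + M 0 1 * w1 + M 0 2 * w2))"
    "N1 (a,b) - det3 M * w1 = (M 1 2 * M 2 0 - M 1 0 * M 2 2) * (1 - (M 0 0 * w0 + M 0 1 * w1 + M 0 2 * w2))"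
    "N2 (a,b) - det3 M * w2 = (M 1 0 * M 2 1 - M 1 1 * M 2 0) * (1 - (M 0 0 * w0 + M 0 1 * w1 + M 0 2 * w2))"
    unfolding N0_def N1_def N2_def e2[symmetric] e3[symmetric] fst_conv snd_conv det3_def
    by (simp_all add: algebra_simps)
  have G2: "N0 (a,b) = det3 M * w0" "N1 (a,b) = det3 M * w1" "N2 (a,b) = det3 M * w2"
    using H unfolding e1 by simp_all
  have F2: "lam0 (a,b) = w0" "lam1 (a,b) = w1" "lam2 (a,b) = w2"
    unfolding lam0_def lam1_def lam2_def G2 using dn by simp_all
  define U where "U = {z. 0 < lam0 z \<and> 0 < lam1 z \<and> 0 < lam2 z}"
  have c: "continuous_on UNIV lam0" "continuous_on UNIV lam1" "continuous_on UNIV lam2"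
    unfolding lam0_def lam1_def lam2_def N0_def N1_def N2_def
    by (intro continuous_intros; use dn in auto)+
  have "open {z. (\<lambda>_. 0) z < lam0 z}" "open {z. (\<lambda>_. 0) z < lam1 z}" "open {z. (\<lambda>_. 0) z < lam2 z}"
    by (rule open_Collect_less[OF continuous_on_const c(1)] open_Collect_less[OF continuous_on_const c(2)]
        open_Collect_less[OF continuous_on_const c(3)])+
  hence "open ({z. 0 < lam0 z} \<inter> {z. 0 < lam1 z} \<inter> {z. 0 < lam2 z})" by auto
  moreover have "U = {z. 0 < lam0 z} \<inter> {z. 0 < lam1 z} \<inter> {z. 0 < lam2 z}" unfolding U_def by auto
  ultimately have "open U" by simp
  moreover have "(a,b) \<in> U" unfolding U_def using F2 w by simp
  moreover have "U \<subseteq> convex hull {vert M 2, vert M 1, vert M 0}"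
  proof
    fix z assume "z \<in> U"
    hence l: "0 < lam0 z" "0 < lam1 z" "0 < lam2 z" by (auto simp: U_def)
    have "z = (M 0 2 * lam2 z) *\<^sub>R vert M 2 + (M 0 1 * lam1 z) *\<^sub>R vert M 1 + (M 0 0 * lam0 z) *\<^sub>R vert M 0"
    proof -
      have "fst z = M 1 0 * lam0 z + M 1 1 * lam1 z + M 1 2 * lam2 z" using F1(2) by simp
      moreover have "snd z = M 2 0 * lam0 z + M 2 1 * lam1 z + M 2 2 * lam2 z" using F1(3) by simp
      ultimately show ?thesis using pos unfolding vert_def
        by (cases z) (simp add: cancel_aux, simp add: algebra_simps)
    qed
    moreover have "M 0 2 * lam2 z + M 0 1 * lam1 z + M 0 0 * lam0 z = 1" using F1(1)[of z] by linarith
    ultimately show "z \<in> convex hull {vert M 2, vert M 1, vert M 0}"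
      unfolding convex_hull_3 using l pos
      by (intro CollectI exI[of _ "M 0 2 * lam2 z"] exI[of _ "M 0 1 * lam1 z"] exI[of _ "M 0 0 * lam0 z"]) auto
  qed
  ultimately show ?thesis by (rule interiorI)
qed

theorem theorem2p5:
  fixes \<theta> :: real and p q n :: nat and \<alpha> \<beta> :: real
  assumes "cubic_gen \<theta>"
    and "p > 0" and "q > 0" and "coprime p q" and "\<not> 3 dvd p"
    and "(\<alpha>, \<beta>) \<in> DeltaK \<theta>"
  shows "(\<alpha>, \<beta>) \<in> delta_n \<theta> (real p / real q) n (\<alpha>, \<beta>)"
proof -
  define r where "r = real p / real q"
  define A where "A = Aprod \<theta> r n (\<alpha>, \<beta>)"
  define M where "M = Mn \<theta> r n (\<alpha>, \<beta>)"
  have PP: "PP (\<alpha>,\<beta>)" using assms(6) by (auto simp: DeltaK_def PP_def)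
  from main[OF PP, of \<theta> r n] obtain c qq where c: "c > 0" "PP qq"
    "vv (\<alpha>,\<beta>) = c *\<^sub>R mvec A (vv qq)" unfolding A_def by blast
  obtain x y where qq: "qq = (x,y)" by (cases qq)
  have xy: "x > 0" "y > 0" "x + y < 1" using PPD[of x y] c(2) qq by auto
  have "vv qq = mvec Smat (1-x-y, x, y)" unfolding qq by (simp add: vv_def mvec_def Smat_def mat3_def)
  hence "mvec M (c *\<^sub>R (1-x-y, x, y)) = (1, \<alpha>, \<beta>)"
  proof -
    assume h: "vv qq = mvec Smat (1-x-y, x, y)"
    have "mvec M (c *\<^sub>R (1-x-y, x, y)) = c *\<^sub>R mvec A (mvec Smat (1-x-y, x, y))"
      unfolding M_def Mn_def A_def by (simp only: mvec_mmul mvec_scale)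
    also have "\<dots> = vv (\<alpha>,\<beta>)" using c(3) h by simp
    finally show ?thesis by (simp add: vv_def)
  qed
  hence eq: "mvec M (c*(1-x-y), c*x, c*y) = (1, \<alpha>, \<beta>)" by simp
  have col: "mvec A (1,0,0) = (M 0 0, M 1 0, M 2 0)" "mvec A (1,1,0) = (M 0 1, M 1 1, M 2 1)"
    "mvec A (1,0,1) = (M 0 2, M 1 2, M 2 2)"
    unfolding M_def Mn_def A_def[symmetric] by (simp_all add: mmul_def sum3 mvec_def Smat_def mat3_def)
  have "cone (mvec A (1,0,0))" "cone (mvec A (1,1,0))" "cone (mvec A (1,0,1))"
    unfolding A_def by (rule cone_Aprod; simp add: cone_def)+
  hence pos: "M 0 0 > 0" "M 0 1 > 0" "M 0 2 > 0" unfolding col by (simp_all add: cone_def)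
  have "det3 M = det3 A * det3 Smat" unfolding M_def Mn_def A_def by (rule det3_mmul)
  moreover have "det3 Smat = 1" by (simp add: det3_def Smat_def mat3_def)
  ultimately have dn: "det3 M \<noteq> 0" using det3_Aprod[of \<theta> r n "(\<alpha>,\<beta>)"] unfolding A_def by simp
  have "(\<alpha>, \<beta>) \<in> interior (convex hull {vert M 2, vert M 1, vert M 0})"
    by (rule geom[OF dn pos _ _ _ eq]) (use c(1) xy in auto)
  thus ?thesis unfolding delta_n_def Let_def M_def r_def .
qed

end
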